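(* Let $\lambda\in\mathbb{C}^*$, $\alpha\in\mathbb{C}$, $t\in\{1,-1\}$. Let $W=\mathbb{C}[x]\mathbf{1}_{\bar0}\oplus\mathbb{C}[y]\mathbf{1}_{\bar1}$ be the $\mathbb{Z}_2$-graded space with $W_{\bar0}=\mathbb{C}[x]\mathbf{1}_{\bar0}$, $W_{\bar1}=\mathbb{C}[y]\mathbf{1}_{\bar1}$ (writing $f(x)$ for $f(x)\mathbf{1}_{\bar0}$ and $g(y)$ for $g(y)\mathbf{1}_{\bar1}$). For $m\in\mathbb{Z}$, $r\in\frac12+\mathbb{Z}$, $p\in\frac12\mathbb{Z}$, $f\in\mathbb{C}[x]$, $g\in\mathbb{C}[y]$ define $$L_mf(x)=\lambda^m(x+m\alpha)f(x+m),\quad L_mg(y)=\lambda^m\big(y+m(\alpha+\tfrac12)\big)g(y+m),$$ $$I_rf(x)=-2t^{2r}\lambda^r\alpha f(x+r),\quad I_rg(y)=t^{2r}\lambda^r(1-2\alpha)g(y+r),$$ $$G_pf(x)=t^{2p}\lambda^pf(y+p),\quad G_pg(y)=(-t)^{2p}\lambda^p(x+2p\alpha)g(x+p).$$ Then $W$ is a $\mathcal{T}$-module under this action (denoted $\mathcal{N}_t(\lambda,\alpha)$), and it is free of rank $2$ as a module over $\mathcal{U}(\mathbb{C}L_0)$.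
   Context: The twisted $N=2$ superconformal algebra $\mathcal{T}$ is the Lie superalgebra over $\mathbb{C}$ with basis $\{L_m, I_r, G_p\mid m\in\mathbb{Z}, r\in\frac12+\mathbb{Z}, p\in\frac12\mathbb{Z}\}$, even part spanned by the $L_m,I_r$, odd part spanned by the $G_p$, and with the only nonzero brackets $[L_m,L_n]=(m-n)L_{m+n}$, $[L_m,I_r]=-rI_{m+r}$, $[L_m,G_p]=(\frac m2-p)G_{m+p}$, $[I_r,G_p]=G_{r+p}$, and $[G_p,G_q]=(-1)^{2p}2L_{p+q}$ if $p+q\in\mathbb{Z}$, $[G_p,G_q]=(-1)^{2p+1}(p-q)I_{p+q}$ if $p+q\in\frac12+\mathbb{Z}$. A $\mathcal{T}$-module is a $\mathbb{Z}_2$-graded space with $\mathcal{T}_{\bar i}V_{\bar j}\subseteq V_{\bar i+\bar j}$ and $x(yv)-(-1)^{|x||y|}y(xv)=[x,y]v$. For $p\in\frac12\mathbb{Z}$, $\lambda^p$ means $(\lambda^{1/2})^{2p}$ for a fixed square root $\lambda^{1/2}$. *)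

theory Defs
  imports "HOL-Computational_Algebra.Polynomial"
begin

text \<open>Basis of the twisted N=2 superconformal algebra T.
  Half-integer indices are encoded by twice their value:
  Lb m = L_m (m integer), Ib k = I_(k/2) (k must be odd), Gb k = G_(k/2) (k any integer).\<close>

datatype tbasis = Lb int | Ib int | Gb int

fun tvalid :: "tbasis \<Rightarrow> bool" where
  "tvalid (Lb m) = True"
| "tvalid (Ib k) = odd k"
| "tvalid (Gb k) = True"

fun todd :: "tbasis \<Rightarrow> bool" where
  "todd (Gb k) = True"
| "todd _ = False"

text \<open>The bracket [a,b] as a linear combination of basis elements
  (coefficient, basis element); the listed brackets of the paper, extended
  by super-antisymmetry, all others zero.\<close>

fun tbr :: "tbasis \<Rightarrow> tbasis \<Rightarrow> (complex \<times> tbasis) list" where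
  "tbr (Lb m) (Lb n) = [(of_int (m - n), Lb (m + n))]"
| "tbr (Lb m) (Ib k) = [(- of_int k / 2, Ib (2 * m + k))]"
| "tbr (Ib k) (Lb m) = [(of_int k / 2, Ib (2 * m + k))]"
| "tbr (Lb m) (Gb k) = [((of_int m - of_int k) / 2, Gb (2 * m + k))]"
| "tbr (Gb k) (Lb m) = [(- (of_int m - of_int k) / 2, Gb (2 * m + k))]"
| "tbr (Ib k) (Gb l) = [(1, Gb (k + l))]"
| "tbr (Gb l) (Ib k) = [(-1, Gb (k + l))]"
| "tbr (Ib k) (Ib l) = []"
| "tbr (Gb k) (Gb l) =
     (if even (k + l) then [((-1) powi k * 2, Lb ((k + l) div 2))]
      else [((-1) powi (k + 1) * of_int (k - l) / 2, Ib (k + l))])"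

text \<open>The space W = C[x] 1_0 (+) C[y] 1_1, an element (f, g) meaning f(x) 1_0 + g(y) 1_1.\<close>

type_synonym wsp = "complex poly \<times> complex poly"

definition wadd :: "wsp \<Rightarrow> wsp \<Rightarrow> wsp" where
  "wadd v w = (fst v + fst w, snd v + snd w)"

definition wsmul :: "complex \<Rightarrow> wsp \<Rightarrow> wsp" where
  "wsmul c v = (smult c (fst v), smult c (snd v))"

definition wzero :: wsp where "wzero = (0, 0)"

definition weven :: "wsp \<Rightarrow> bool" where "weven v \<longleftrightarrow> snd v = 0"
definition wodd :: "wsp \<Rightarrow> bool" where "wodd v \<longleftrightarrow> fst v = 0"

definition shift :: "complex \<Rightarrow> complex poly \<Rightarrow> complex poly" where
  "shift h f = pcompose f [:h, 1:]"

text \<open>The action of N_t(lambda, alpha); s is the fixed square root of lambda,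
  so lambda^p = s^(2p).\<close>

fun nact :: "complex \<Rightarrow> complex \<Rightarrow> complex \<Rightarrow> tbasis \<Rightarrow> wsp \<Rightarrow> wsp" where
  "nact s \<alpha> t (Lb m) (f, g) =
     (smult (s powi (2 * m)) ([:of_int m * \<alpha>, 1:] * shift (of_int m) f),
      smult (s powi (2 * m)) ([:of_int m * (\<alpha> + 1/2), 1:] * shift (of_int m) g))"
| "nact s \<alpha> t (Ib k) (f, g) =
     (smult (- 2 * t powi k * s powi k * \<alpha>) (shift (of_int k / 2) f),
      smult (t powi k * s powi k * (1 - 2 * \<alpha>)) (shift (of_int k / 2) g))"
| "nact s \<alpha> t (Gb k) (f, g) =
     (smult ((- t) powi k * s powi k) ([:of_int k * \<alpha>, 1:] * shift (of_int k / 2) g),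
      smult (t powi k * s powi k) (shift (of_int k / 2) f))"

definition is_T_module :: "(tbasis \<Rightarrow> wsp \<Rightarrow> wsp) \<Rightarrow> bool" where
  "is_T_module \<rho> \<longleftrightarrow>
     (\<forall>a. tvalid a \<longrightarrow>
        (\<forall>v w. \<rho> a (wadd v w) = wadd (\<rho> a v) (\<rho> a w)) \<and>
        (\<forall>c v. \<rho> a (wsmul c v) = wsmul c (\<rho> a v)) \<and>
        (\<forall>v. weven v \<longrightarrow> (if todd a then wodd (\<rho> a v) else weven (\<rho> a v))) \<and>
        (\<forall>v. wodd v \<longrightarrow> (if todd a then weven (\<rho> a v) else wodd (\<rho> a v)))) \<and>
     (\<forall>a b v. tvalid a \<longrightarrow> tvalid b \<longrightarrow>
        wadd (\<rho> a (\<rho> b v))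
             (wsmul (- (if todd a \<and> todd b then -1 else 1)) (\<rho> b (\<rho> a v)))
        = foldr (\<lambda>(c, e) acc. wadd (wsmul c (\<rho> e v)) acc) (tbr a b) wzero)"

text \<open>Action of U(C L_0) = C[L_0]: P(L_0) v.\<close>
definition uL0_act :: "(tbasis \<Rightarrow> wsp \<Rightarrow> wsp) \<Rightarrow> complex poly \<Rightarrow> wsp \<Rightarrow> wsp" where
  "uL0_act \<rho> P v = foldr (\<lambda>i acc. wadd (wsmul (coeff P i) ((\<rho> (Lb 0) ^^ i) v)) acc)
                      [0..<Suc (degree P)] wzero"

definition free_rank2_UL0 :: "(tbasis \<Rightarrow> wsp \<Rightarrow> wsp) \<Rightarrow> bool" where
  "free_rank2_UL0 \<rho> \<longleftrightarrow>
     (\<exists>w1 w2. \<forall>v. \<exists>!PQ. v = wadd (uL0_act \<rho> (fst PQ) w1) (uL0_act \<rho> (snd PQ) w2))"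

end

theory Submission
  imports Defs
begin
lemma tpow_e: assumes "(t::complex)^2 = 1" shows "t powi (2*j) = 1"
proof -
  have "t powi (2*j) = (t powi 2) powi j" by (rule power_int_mult)
  also have "t powi 2 = t^2" by (rule power_int_numeral)
  finally show ?thesis using assms by simp
qed
lemma tpow: assumes "(t::complex)^2 = 1" shows "t powi k = (if even k then 1 else t)"
proof (cases "even k")
  case True then obtain j where "k = 2*j" by auto
  then show ?thesis using tpow_e[OF assms] True by simp
next
  case False then obtain j where j: "k = 2*j+1" using oddE by blast
  have t0: "t \<noteq> 0" using assms by auto
  have "t powi k = t powi (2*j) * t powi 1" unfolding j using t0 power_int_add by blast
  then show ?thesis using tpow_e[OF assms] False by simp
qed
lemma poly_shift[simp]: "poly (shift h f) x = poly f (x + h)"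
  by (simp add: shift_def poly_pcompose add.commute)
lemma polyext: assumes "\<And>x. poly p x = poly (q::complex poly) x" shows "p = q"
proof -
  have "poly p = poly q" using assms by (rule ext)
  then show ?thesis by (simp only: poly_eq_poly_eq_iff)
qed
lemma m1pow: "(-1::complex) powi k = (if even k then 1 else -1)"
  using tpow[of "-1::complex"] by simp
lemma ofint_half: "even k \<Longrightarrow> complex_of_int (k div 2) = of_int k / 2"
  by (metis dvd_mult_div_cancel nonzero_mult_div_cancel_left of_int_mult of_int_numeral zero_neq_numeral)
lemma rel: assumes s0: "s \<noteq> 0" and t2: "t^2 = 1" and nt2: "(-t)^2 = 1" 
  and "tvalid a" "tvalid b" shows "wadd (nact s \<alpha> t a (nact s \<alpha> t b (f,g)))
             (wsmul (- (if todd a \<and> todd b then -1 else 1)) (nact s \<alpha> t b (nact s \<alpha> t a (f,g))))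
        = foldr (\<lambda>(c, e) acc. wadd (wsmul c (nact s \<alpha> t e (f,g))) acc) (tbr a b) wzero"
proof -
  have tt: "t * t = 1" "t * (t * z) = z" for z using t2 by (auto simp: power2_eq_square mult.assoc[symmetric])
  show ?thesis
  using assms(4,5)
  apply (cases a; cases b)
  apply (simp_all add: wadd_def wsmul_def wzero_def split: if_split)
  apply (intro conjI impI polyext; simp add: power_int_add[OF disjI1, OF s0] tpow[OF t2] tpow[OF nt2] m1pow distrib_left ofint_half;
     simp add: algebra_simps add_divide_distrib; simp add: field_simps tt)+
  done
qed

lemma shift_add: "shift h (f + g) = shift h f + shift h g"
  by (simp add: shift_def pcompose_add)
lemma shift_smult: "shift h (smult c f) = smult c (shift h f)"
  by (simp add: shift_def pcompose_smult)
lemma shift_0[simp]: "shift h 0 = 0" by (simp add: shift_def)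
lemma shift0: "shift 0 f = f" by (simp add: shift_def pcompose_idR)

lemma lin_add: "nact s \<alpha> t a (wadd v w) = wadd (nact s \<alpha> t a v) (nact s \<alpha> t a w)"
  by (cases a; cases v; cases w; simp add: wadd_def shift_add algebra_simps smult_add_right)
lemma lin_smul: "nact s \<alpha> t a (wsmul c v) = wsmul c (nact s \<alpha> t a v)"
  by (cases a; cases v; simp add: wsmul_def; intro conjI polyext; simp add: algebra_simps)
lemma grade_even: "weven v \<Longrightarrow> (if todd a then wodd (nact s \<alpha> t a v) else weven (nact s \<alpha> t a v))"
  by (cases a; cases v; simp add: weven_def wodd_def)
lemma grade_odd: "wodd v \<Longrightarrow> (if todd a then weven (nact s \<alpha> t a v) else wodd (nact s \<alpha> t a v))"
  by (cases a; cases v; simp add: weven_def wodd_def)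

lemma L0_pow: "(nact s \<alpha> t (Lb 0) ^^ i) (f, g) = ([:0,1:]^i * f, [:0,1:]^i * g)"
  by (induction i) (simp_all add: shift0)

lemma foldr_w: "foldr (\<lambda>i acc. wadd (wsmul (c i) (F i)) acc) xs wzero
   = (\<Sum>i\<leftarrow>xs. smult (c i) (fst (F i)), \<Sum>i\<leftarrow>xs. smult (c i) (snd (F i)))"
  by (induction xs) (simp_all add: wadd_def wsmul_def wzero_def)

lemma sum_list_smult_mult: "(\<Sum>i\<leftarrow>xs. smult (c i) (X i * (f::complex poly))) = (\<Sum>i\<leftarrow>xs. smult (c i) (X i)) * f"
  by (induction xs) (simp_all add: algebra_simps)

lemma uL0: "uL0_act (nact s \<alpha> t) P (f, g) = (P * f, P * g)"
proof -
  have P: "(\<Sum>i\<leftarrow>[0..<Suc (degree P)]. smult (coeff P i) ([:0,1:]^i)) = P"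
  proof -
    have "(\<Sum>i\<leftarrow>[0..<Suc (degree P)]. smult (coeff P i) ([:0,1:]^i))
        = (\<Sum>i\<in>{0..<Suc (degree P)}. monom (coeff P i) i)"
      by (simp add: sum_set_upt_conv_sum_list_nat[symmetric] monom_altdef)
    also have "{0..<Suc (degree P)} = {..degree P}" by auto
    finally show ?thesis by (simp add: poly_as_sum_of_monoms)
  qed
  have "uL0_act (nact s \<alpha> t) P (f, g) = ((\<Sum>i\<leftarrow>[0..<Suc (degree P)]. smult (coeff P i) ([:0,1:]^i)) * f,
      (\<Sum>i\<leftarrow>[0..<Suc (degree P)]. smult (coeff P i) ([:0,1:]^i)) * g)"
    unfolding uL0_act_def foldr_w L0_pow fst_conv snd_conv sum_list_smult_mult ..
  then show ?thesis using P by simp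
qed

lemma free: "free_rank2_UL0 (nact s \<alpha> t)"
  unfolding free_rank2_UL0_def
proof (intro exI allI)
  fix v :: wsp
  have e: "wadd (uL0_act (nact s \<alpha> t) (fst PQ) (1,0)) (uL0_act (nact s \<alpha> t) (snd PQ) (0,1)) = PQ" for PQ
    by (simp add: uL0 wadd_def)
  show "\<exists>!PQ. v = wadd (uL0_act (nact s \<alpha> t) (fst PQ) (1,0)) (uL0_act (nact s \<alpha> t) (snd PQ) (0,1))"
    unfolding e by auto
qed

theorem proposition2p8:
  fixes lam s \<alpha> t :: complex
  assumes "lam \<noteq> 0" and "s ^ 2 = lam" and "t = 1 \<or> t = -1"
  shows "is_T_module (nact s \<alpha> t) \<and> free_rank2_UL0 (nact s \<alpha> t)"
proof -
  have s0: "s \<noteq> 0" using assms(1,2) by auto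
  have t2: "t^2 = 1" and nt2: "(-t)^2 = 1" using assms(3) by auto
  have "is_T_module (nact s \<alpha> t)"
    unfolding is_T_module_def
  proof (intro conjI allI impI)
    fix a b v assume "tvalid a" "tvalid b"
    obtain f g :: "complex poly" where v: "v = (f, g)" by fastforce
    show "wadd (nact s \<alpha> t a (nact s \<alpha> t b v))
             (wsmul (- (if todd a \<and> todd b then -1 else 1)) (nact s \<alpha> t b (nact s \<alpha> t a v)))
        = foldr (\<lambda>(c, e) acc. wadd (wsmul c (nact s \<alpha> t e v)) acc) (tbr a b) wzero"
      unfolding v by (rule rel[OF s0 t2 nt2 \<open>tvalid a\<close> \<open>tvalid b\<close>])
  qed (simp_all add: lin_add lin_smul grade_even grade_odd)
  then show ?thesis using free by blast
qed
end
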